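(* Let $N\ge 1$ be an integer and $h,g>0$ real numbers. For $k\in\{0,1,\dots,N\}$ and $\Delta>0$ define $$R_k(\Delta):=\log\Big(1+(N-k)\frac{h^2}{1+\Delta}\Big)+\log(1+kg^2)-k\log\Big(\frac{1+\Delta}{\Delta}\Big)$$ (logarithms base $2$), and let $\Delta^*_{0N}$ be the positive root of $R_0(\Delta)=R_N(\Delta)$. Then $\Delta^*_{0N}$ attains $\max_{\Delta>0}\min_{k\in\{0,\dots,N\}}R_k(\Delta)$, and this optimal value equals $R_0(\Delta^*_{0N})$.
   Context: This is the optimal common quantization distortion for quantize-map-and-forward in the symmetric $N$-relay diamond network (all source-relay channel magnitudes equal $h$, all relay-destination magnitudes equal $g$); $R_k(\Delta)$ is the rate of a cut containing $k$ relays when every relay uses Gaussian quantization distortion $\Delta$, and the equation $R_0(\Delta)=R_N(\Delta)$ has exactly one positive root. *)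

theory Defs
  imports Complex_Main
begin

text \<open>Cut rate with k relays on the destination side, common distortion D (logs base 2).\<close>
definition qmf_R :: "nat \<Rightarrow> real \<Rightarrow> real \<Rightarrow> nat \<Rightarrow> real \<Rightarrow> real" where
  "qmf_R N h g k D =
     log 2 (1 + real (N - k) * h\<^sup>2 / (1 + D)) + log 2 (1 + real k * g\<^sup>2)
     - real k * log 2 ((1 + D) / D)"

definition qmf_minR :: "nat \<Rightarrow> real \<Rightarrow> real \<Rightarrow> real \<Rightarrow> real" where
  "qmf_minR N h g D = Min ((\<lambda>k. qmf_R N h g k D) ` {0..N})"

end

theory Submission
  imports Defs "HOL-Analysis.Analysis"
begin

lemma key:
  fixes x t :: real
  assumes "x \<ge> 0" "0 \<le> t" "t \<le> 1"
  shows "t * log 2 (1 + x) \<le> log 2 (1 + t * x)"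
proof -
  have c: "(1-t) * ln 1 + t * ln (1+x) \<le> ln ((1-t) *\<^sub>R 1 + t *\<^sub>R (1+x))"
    using ln_concave[unfolded concave_on_iff] assms
    by (metis add_pos_nonneg diff_add_cancel diff_ge_0_iff_ge greaterThan_iff zero_less_one)
  have c2: "t * ln (1+x) \<le> ln (1 - t + t * (1 + x))" using c by simp
  have e: "1 - t + t * (1 + x) = 1 + t * x" by algebra
  have "t * ln (1+x) \<le> ln (1 + t*x)" using c2 e by metis
  thus ?thesis unfolding log_def by (simp add: divide_right_mono)
qed

lemma interp:
  fixes N k :: nat and h g D :: real
  assumes "N \<ge> 1" "k \<le> N" "D > 0"
  shows "qmf_R N h g k D \<ge> (1 - real k / real N) * qmf_R N h g 0 D
                           + (real k / real N) * qmf_R N h g N D"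
proof -
  define t where "t = real k / real N"
  define c where "c = h\<^sup>2 / (1 + D)"
  define L where "L = log 2 ((1 + D) / D)"
  have t0: "0 \<le> t" and t1: "t \<le> 1" using assms by (auto simp: t_def divide_le_eq_1)
  have c0: "c \<ge> 0" using assms by (simp add: c_def)
  have Nk: "real (N - k) = (1 - t) * real N" using assms by (simp add: t_def of_nat_diff field_simps)
  have kN: "real k = t * real N" using assms by (simp add: t_def)
  have R0: "qmf_R N h g 0 D = log 2 (1 + real N * c)"
    by (simp add: qmf_R_def c_def)
  have RN: "qmf_R N h g N D = log 2 (1 + real N * g\<^sup>2) - real N * L"
    by (simp add: qmf_R_def L_def)
  have Rk: "qmf_R N h g k D = log 2 (1 + (1 - t) * (real N * c)) + log 2 (1 + t * (real N * g\<^sup>2)) - t * (real N * L)"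
    unfolding qmf_R_def Nk L_def c_def by (simp add: kN mult.assoc)
  have a1: "(1-t) * log 2 (1 + real N * c) \<le> log 2 (1 + (1 - t) * (real N * c))"
    using key[of "real N * c" "1-t"] c0 t0 t1 by simp
  have a2: "t * log 2 (1 + real N * g\<^sup>2) \<le> log 2 (1 + t * (real N * g\<^sup>2))"
    using key[of "real N * g\<^sup>2" t] t0 t1 by simp
  show ?thesis unfolding R0 RN Rk t_def[symmetric] using a1 a2
    by (simp add: algebra_simps)
qed

theorem theorem2:
  fixes N :: nat and h g Ds :: real
  assumes "N \<ge> 1" and "h > 0" and "g > 0"
    and "Ds > 0" and "qmf_R N h g 0 Ds = qmf_R N h g N Ds"
  shows "(\<forall>D>0. qmf_minR N h g D \<le> qmf_minR N h g Ds)
         \<and> qmf_minR N h g Ds = qmf_R N h g 0 Ds"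
proof -
  have ge: "qmf_R N h g k Ds \<ge> qmf_R N h g 0 Ds" if "k \<le> N" for k
  proof -
    have "qmf_R N h g k Ds \<ge> (1 - real k / real N) * qmf_R N h g 0 Ds
                           + (real k / real N) * qmf_R N h g N Ds"
      using interp[OF assms(1) that assms(4)] .
    thus ?thesis using assms(5) by (simp add: algebra_simps)
  qed
  have eq: "qmf_minR N h g Ds = qmf_R N h g 0 Ds"
    unfolding qmf_minR_def
    by (rule Min_eqI) (use ge in auto)
  have R0: "qmf_R N h g 0 D = log 2 (1 + real N * h\<^sup>2 / (1 + D))" for D
    by (simp add: qmf_R_def)
  have RN: "qmf_R N h g N D = log 2 (1 + real N * g\<^sup>2) - real N * log 2 ((1 + D) / D)" for D
    by (simp add: qmf_R_def)
  have le0: "qmf_minR N h g D \<le> qmf_R N h g 0 D" for D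
    unfolding qmf_minR_def by (rule Min_le) auto
  have leN: "qmf_minR N h g D \<le> qmf_R N h g N D" for D
    unfolding qmf_minR_def by (rule Min_le) auto
  have "qmf_minR N h g D \<le> qmf_minR N h g Ds" if D: "D > 0" for D
  proof (cases "D \<le> Ds")
    case True
    have "(1 + Ds) / Ds \<le> (1 + D) / D"
      using D True assms(4) by (simp add: field_simps)
    hence "log 2 ((1 + Ds) / Ds) \<le> log 2 ((1 + D) / D)"
      using D assms(4) by simp
    hence "qmf_R N h g N D \<le> qmf_R N h g N Ds"
      unfolding RN by (simp add: mult_left_mono)
    thus ?thesis using leN[of D] eq assms(5) by linarith
  next
    case False
    have "real N * h\<^sup>2 / (1 + D) \<le> real N * h\<^sup>2 / (1 + Ds)"
      using False assms(4) by (intro divide_left_mono) auto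
    moreover have "0 < 1 + real N * h\<^sup>2 / (1 + D)" using D by (simp add: add_pos_nonneg)
    ultimately have "log 2 (1 + real N * h\<^sup>2 / (1 + D)) \<le> log 2 (1 + real N * h\<^sup>2 / (1 + Ds))"
      by (subst log_le_cancel_iff) auto
    hence "qmf_R N h g 0 D \<le> qmf_R N h g 0 Ds"
      unfolding R0 .
    thus ?thesis using le0[of D] eq by linarith
  qed
  with eq show ?thesis by blast
qed

end
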